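(* Let $d\ge1$, $\lambda>0$, $\delta>0$, and let $f:\mathbb{R}^d\to\mathbb{R}$ satisfy: (A1) $f$ is continuous and has at least one minimizer; (A2) $\int_{\mathbb{R}^d}\exp(-f(y)/\delta)\,dy<+\infty$. Assume there is $C_P(\delta)<\infty$ such that for every $x\in\mathbb{R}^d$ the measure $\mu_x$ satisfies a Poincaré inequality with constant $C_P(\delta,x)\le C_P(\delta)$. If $\lambda\ge C_P(\delta)/\delta$, then $f^{\lambda,\delta}$ is convex.
   Context: $\mu_x$ is the probability measure on $\mathbb{R}^d$ with density proportional to $\exp(-f(y)/\delta)\exp(-\|y-x\|^2/(2\lambda\delta))$. A probability measure $\mu$ satisfies a Poincaré inequality with constant $C_P>0$ if $\int|g-\int g\,d\mu|^2d\mu\le C_P\int\|\nabla g\|^2d\mu$ for every smooth, suitably integrable $g$. The soft Moreau envelope is $f^{\lambda,\delta}(x)=-\delta\log\mathbb{E}_{y\sim\mathcal N(x,\lambda\delta I)}[\exp(-f(y)/\delta)]$. *)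

theory Defs
  imports "HOL-Analysis.Analysis"
begin

definition mu_weight :: "('a::euclidean_space \<Rightarrow> real) \<Rightarrow> real \<Rightarrow> real \<Rightarrow> 'a \<Rightarrow> 'a \<Rightarrow> real" where
  "mu_weight f lam del x y = exp (- f y / del) * exp (- (norm (y - x))\<^sup>2 / (2 * lam * del))"

definition mu :: "('a::euclidean_space \<Rightarrow> real) \<Rightarrow> real \<Rightarrow> real \<Rightarrow> 'a \<Rightarrow> 'a measure" where
  "mu f lam del x = density lborel
     (\<lambda>y. ennreal (mu_weight f lam del x y / (\<integral>z. mu_weight f lam del x z \<partial>lborel)))"

definition poincare :: "'a::euclidean_space measure \<Rightarrow> real \<Rightarrow> bool" where
  "poincare M C \<longleftrightarrow> C > 0 \<and>
     (\<forall>g G. (\<forall>y. GDERIV g y :> G y) \<longrightarrow> continuous_on UNIV G \<longrightarrow>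
        integrable M (\<lambda>y. (g y)\<^sup>2) \<longrightarrow> integrable M (\<lambda>y. (norm (G y))\<^sup>2) \<longrightarrow>
        (\<integral>y. (g y - (\<integral>z. g z \<partial>M))\<^sup>2 \<partial>M) \<le> C * (\<integral>y. (norm (G y))\<^sup>2 \<partial>M))"

(* soft Moreau envelope: -delta * log E_{y ~ N(x, lambda delta I)} [exp(-f(y)/delta)] *)
definition soft_moreau :: "('a::euclidean_space \<Rightarrow> real) \<Rightarrow> real \<Rightarrow> real \<Rightarrow> 'a \<Rightarrow> real" where
  "soft_moreau f lam del x = - del * ln
     ((2 * pi * lam * del) powr (- real DIM('a) / 2) *
      (\<integral>y. exp (- (norm (y - x))\<^sup>2 / (2 * lam * del)) * exp (- f y / del) \<partial>lborel))"

end

theory Submission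
  imports Defs
begin

lemma DERIV_integral_dom:
  fixes F F' :: "real \<Rightarrow> 'a \<Rightarrow> real"
  assumes int: "\<And>t. integrable M (F t)"
  and meas: "\<And>t. F' t \<in> borel_measurable M"
  and der: "\<And>t y. ((\<lambda>s. F s y) has_real_derivative F' t y) (at t)"
  and g: "integrable M g" and bnd: "\<And>t y. \<bar>F' t y\<bar> \<le> g y"
  shows "((\<lambda>s. \<integral>y. F s y \<partial>M) has_real_derivative (\<integral>y. F' t y \<partial>M)) (at t)"
  unfolding has_field_derivative_iff tendsto_at_iff_sequentially
proof (intro allI impI)
  fix X :: "nat \<Rightarrow> real" assume X: "\<forall>i. X i \<in> UNIV - {t}" and Xt: "X \<longlonglongrightarrow> t"
  have eq: "((\<lambda>s. ((\<integral>y. F s y \<partial>M) - (\<integral>y. F t y \<partial>M)) / (s - t)) \<circ> X) i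
     = (\<integral>y. (F (X i) y - F t y) / (X i - t) \<partial>M)" for i
    using int by (simp add: integral_diff)
  have bd: "\<bar>(F (X i) y - F t y) / (X i - t)\<bar> \<le> g y" for i y
  proof -
    have ne: "X i \<noteq> t" using X by auto
    show ?thesis
    proof (cases "X i < t")
      case True
      from MVT2[OF True, of "\<lambda>s. F s y" "\<lambda>s. F' s y"] der
      obtain z where z: "F t y - F (X i) y = (t - X i) * F' z y" by blast
      then have "F (X i) y - F t y = (X i - t) * F' z y" by (simp add: algebra_simps)
      then have "(F (X i) y - F t y) / (X i - t) = F' z y" using ne by simp
      with bnd[of z y] show ?thesis by simp
    next
      case False
      with ne have lt: "t < X i" by auto
      from MVT2[OF lt, of "\<lambda>s. F s y" "\<lambda>s. F' s y"] der
      obtain z where "F (X i) y - F t y = (X i - t) * F' z y" by blast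
      then have "(F (X i) y - F t y) / (X i - t) = F' z y" using ne by simp
      with bnd[of z y] show ?thesis by simp
    qed
  qed
  have lim: "(\<lambda>i. (F (X i) y - F t y) / (X i - t)) \<longlonglongrightarrow> F' t y" for y
  proof -
    have "((\<lambda>s. (F s y - F t y) / (s - t)) \<longlongrightarrow> F' t y) (at t)"
      using der[where t=t and y=y] unfolding has_field_derivative_iff .
    then show ?thesis using X Xt unfolding tendsto_at_iff_sequentially comp_def by blast
  qed
  have "(\<lambda>i. \<integral>y. (F (X i) y - F t y) / (X i - t) \<partial>M) \<longlonglongrightarrow> (\<integral>y. F' t y \<partial>M)"
  proof (rule integral_dominated_convergence[where w=g])
    show "F' t \<in> borel_measurable M" by (rule meas)
    show "(\<lambda>y. (F (X i) y - F t y) / (X i - t)) \<in> borel_measurable M" for i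
      using int by (intro borel_measurable_divide borel_measurable_diff) auto
    show "integrable M g" by (rule g)
    show "AE x in M. (\<lambda>i. (F (X i) x - F t x) / (X i - t)) \<longlonglongrightarrow> F' t x"
      using lim by auto
    show "AE x in M. norm ((F (X i) x - F t x) / (X i - t)) \<le> g x" for i
      using bd by auto
  qed
  then show "((\<lambda>s. ((\<integral>y. F s y \<partial>M) - (\<integral>y. F t y \<partial>M)) / (s - t)) \<circ> X) \<longlonglongrightarrow> (\<integral>y. F' t y \<partial>M)"
    unfolding eq .
qed

lemma gauss_bounds:
  fixes s k :: real assumes k: "k > 0"
  shows "exp (- s\<^sup>2 / (2*k)) \<le> 1"
    and "s\<^sup>2 * exp (- s\<^sup>2 / (2*k)) \<le> 2*k"
    and "\<bar>s\<bar> * exp (- s\<^sup>2 / (2*k)) \<le> 1 + 2*k"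
proof -
  show 1: "exp (- s\<^sup>2 / (2*k)) \<le> 1" using k by simp
  define w where "w = s\<^sup>2 / (2*k)"
  have "w \<le> exp w" using exp_ge_add_one_self[of w] by linarith
  hence "s\<^sup>2 \<le> 2*k * exp w" using k by (simp add: w_def divide_le_eq mult.commute)
  hence "s\<^sup>2 * exp (- w) \<le> 2*k * exp w * exp (- w)"
    by (intro mult_right_mono) auto
  also have "\<dots> = 2*k" by (simp add: exp_minus_inverse mult.assoc)
  finally show 2: "s\<^sup>2 * exp (- s\<^sup>2 / (2*k)) \<le> 2*k" by (simp add: w_def)
  have "0 \<le> (\<bar>s\<bar> - 1)\<^sup>2" by simp
  hence "\<bar>s\<bar> \<le> 1 + s\<^sup>2" by (simp add: power2_diff power2_abs)
  hence "\<bar>s\<bar> * exp (- s\<^sup>2 / (2*k)) \<le> (1 + s\<^sup>2) * exp (- s\<^sup>2 / (2*k))"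
    by (intro mult_right_mono) auto
  also have "\<dots> = exp (- s\<^sup>2 / (2*k)) + s\<^sup>2 * exp (- s\<^sup>2 / (2*k))" by (simp add: algebra_simps)
  also have "\<dots> \<le> 1 + 2*k" using 1 2 by linarith
  finally show "\<bar>s\<bar> * exp (- s\<^sup>2 / (2*k)) \<le> 1 + 2*k" .
qed

lemma line_convex:
  fixes f :: "'a::euclidean_space \<Rightarrow> real" and x0 v :: 'a and lam del :: real
  assumes lam: "lam > 0" and del: "del > 0" and fc: "continuous_on UNIV f"
  and Eint: "integrable lborel (\<lambda>y. exp (- f y / del))"
  and P: "\<forall>x. \<exists>Cx. Cx \<le> lam * del \<and> poincare (mu f lam del x) Cx"
  shows "convex_on UNIV (\<lambda>t. soft_moreau f lam del (x0 + t *\<^sub>R v))"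
proof -
  define k where "k = lam * del"
  have k: "k > 0" using lam del by (simp add: k_def)
  have fm[measurable]: "f \<in> borel_measurable lborel"
    using borel_measurable_continuous_onI[OF fc] by simp
  define E where "E y = exp (- f y / del)" for y
  have Epos: "E y > 0" for y by (simp add: E_def)
  have Eint': "integrable lborel E" using Eint by (simp add: E_def[abs_def])
  define a where "a y = inner (y - x0) v" for y
  define b where "b = inner v v"
  define cc where "cc y = inner (y - x0) (y - x0)" for y
  define G where "G t y = E y * exp (- (cc y - 2 * t * a y + t\<^sup>2 * b) / (2 * k))" for t y
  define r where "r t y = a y - t * b" for t y
  define F1 where "F1 t y = G t y * (r t y / k)" for t y
  define F2 where "F2 t y = G t y * ((r t y / k)\<^sup>2 - b / k)" for t y
  have b_eq: "b = (norm v)\<^sup>2" by (simp add: b_def power2_norm_eq_inner)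
  have nrm: "(norm (y - (x0 + t *\<^sub>R v)))\<^sup>2 = cc y - 2 * t * a y + t\<^sup>2 * b" for t y
    unfolding power2_norm_eq_inner
    by (simp add: a_def b_def cc_def inner_diff_left inner_diff_right
        inner_add_left inner_add_right inner_commute algebra_simps power2_eq_square)
  have rin: "inner (y - (x0 + t *\<^sub>R v)) v = r t y" for t y
    by (simp add: r_def a_def b_def inner_diff_left inner_add_left algebra_simps)
  have Gn: "G t y = E y * exp (- (norm (y - (x0 + t *\<^sub>R v)))\<^sup>2 / (2 * k))" for t y
    by (simp add: G_def nrm)
  have Gpos: "G t y > 0" for t y by (simp add: G_def Epos)
  have Gm[measurable]: "G t \<in> borel_measurable lborel" for t
    unfolding G_def[abs_def] E_def cc_def a_def by measurable
  have rm[measurable]: "r t \<in> borel_measurable lborel" for t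
    unfolding r_def[abs_def] a_def by measurable
  have F1m[measurable]: "F1 t \<in> borel_measurable lborel" for t
    unfolding F1_def[abs_def] by measurable
  have F2m[measurable]: "F2 t \<in> borel_measurable lborel" for t
    unfolding F2_def[abs_def] by measurable
  have rb: "\<bar>r t y\<bar> \<le> norm (y - (x0 + t *\<^sub>R v)) * norm v" for t y
    using Cauchy_Schwarz_ineq2[of "y - (x0 + t *\<^sub>R v)" v] by (simp add: rin)
  have bG: "\<bar>G t y\<bar> \<le> E y" for t y
    using gauss_bounds(1)[OF k, of "norm (y - (x0 + t *\<^sub>R v))"] Epos[of y]
    by (simp add: Gn abs_mult mult_le_cancel_left1)
  have bGr2: "\<bar>G t y * (r t y)\<^sup>2\<bar> \<le> 2 * k * b * E y" for t y
  proof -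
    let ?s = "norm (y - (x0 + t *\<^sub>R v))"
    let ?e = "exp (- ?s\<^sup>2 / (2 * k))"
    have "(r t y)\<^sup>2 \<le> (?s * norm v)\<^sup>2"
      using rb[of t y] by (metis abs_ge_zero abs_le_square_iff abs_mult abs_norm_cancel)
    hence "\<bar>G t y * (r t y)\<^sup>2\<bar> \<le> E y * ?e * (?s * norm v)\<^sup>2"
      using Epos[of y] by (simp add: Gn abs_mult mult_left_mono)
    also have "\<dots> = E y * (?s\<^sup>2 * ?e) * b" by (simp add: b_eq power_mult_distrib)
    also have "\<dots> \<le> E y * (2 * k) * b"
      using gauss_bounds(2)[OF k, of ?s] Epos[of y] b_eq
      by (intro mult_right_mono mult_left_mono) auto
    finally show ?thesis by (simp add: algebra_simps)
  qed
  have bF1: "\<bar>F1 t y\<bar> \<le> ((1 + 2 * k) * norm v / k) * E y" for t y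
  proof -
    let ?s = "norm (y - (x0 + t *\<^sub>R v))"
    let ?e = "exp (- ?s\<^sup>2 / (2 * k))"
    have "\<bar>F1 t y\<bar> = E y * ?e * \<bar>r t y\<bar> / k" using Epos[of y] k
      by (simp add: F1_def Gn abs_mult abs_divide)
    also have "\<dots> \<le> E y * ?e * (?s * norm v) / k"
      using rb[of t y] Epos[of y] k by (intro divide_right_mono mult_left_mono) auto
    also have "\<dots> = E y * (\<bar>?s\<bar> * ?e) * norm v / k" by simp
    also have "\<dots> \<le> E y * (1 + 2 * k) * norm v / k"
      using gauss_bounds(3)[OF k, of ?s] Epos[of y] k
      by (intro divide_right_mono mult_right_mono mult_left_mono) auto
    finally show ?thesis by (simp add: algebra_simps)
  qed
  have bF2: "\<bar>F2 t y\<bar> \<le> (2 * k * b / k\<^sup>2 + b / k) * E y" for t y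
  proof -
    have "F2 t y = G t y * (r t y)\<^sup>2 / k\<^sup>2 - G t y * b / k"
      by (simp add: F2_def power_divide algebra_simps)
    hence "\<bar>F2 t y\<bar> \<le> \<bar>G t y * (r t y)\<^sup>2 / k\<^sup>2\<bar> + \<bar>G t y * b / k\<bar>"
      by (metis abs_triangle_ineq4)
    also have "\<dots> = \<bar>G t y * (r t y)\<^sup>2\<bar> / k\<^sup>2 + \<bar>G t y\<bar> * b / k"
      using k b_eq by (simp add: abs_divide abs_mult)
    also have "\<dots> \<le> 2 * k * b * E y / k\<^sup>2 + E y * b / k"
      using bGr2[of t y] bG[of t y] k b_eq
      by (intro add_mono divide_right_mono mult_right_mono) auto
    finally show ?thesis by (simp add: algebra_simps)
  qed
  have intE: "integrable lborel (\<lambda>y. C * E y)" for C using Eint' by simp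
  have intB: "integrable lborel h" if "h \<in> borel_measurable lborel" "\<And>y. \<bar>h y\<bar> \<le> C * E y" for h C
  proof (rule Bochner_Integration.integrable_bound[OF intE[of C] that(1)])
    show "AE y in lborel. norm (h y) \<le> norm (C * E y)"
      using that(2) by (intro AE_I2) (smt (verit) real_norm_def)
  qed
  have intG: "integrable lborel (G t)" for t
    by (rule intB[of _ 1]) (use bG in auto)
  have intF1: "integrable lborel (F1 t)" for t
    by (rule intB[OF _ bF1]) simp
  have intF2: "integrable lborel (F2 t)" for t
    by (rule intB[OF _ bF2]) simp
  have intGr2: "integrable lborel (\<lambda>y. G t y * (r t y)\<^sup>2)" for t
    by (rule intB[OF _ bGr2]) simp
  have intGr: "integrable lborel (\<lambda>y. G t y * r t y)" for t
  proof -
    have "integrable lborel (\<lambda>y. k * F1 t y)" using intF1 by simp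
    moreover have "(\<lambda>y. k * F1 t y) = (\<lambda>y. G t y * r t y)" using k by (auto simp: F1_def)
    ultimately show ?thesis by simp
  qed
  have dG: "((\<lambda>s. G s y) has_real_derivative F1 t y) (at t)" for t y
    unfolding G_def F1_def r_def using k
    by (auto intro!: derivative_eq_intros simp: field_simps power2_eq_square)
  have dF1: "((\<lambda>s. F1 s y) has_real_derivative F2 t y) (at t)" for t y
  proof -
    have "((\<lambda>s. G s y * (r s y / k)) has_real_derivative
           F1 t y * (r t y / k) + (- b / k) * G t y) (at t)"
    proof (rule DERIV_mult[OF dG])
      show "((\<lambda>s. r s y / k) has_real_derivative - b / k) (at t)"
        unfolding r_def using k by (auto intro!: derivative_eq_intros)
    qed
    moreover have "F1 t y * (r t y / k) + (- b / k) * G t y = F2 t y"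
      by (simp add: F1_def F2_def power2_eq_square algebra_simps)
    ultimately show ?thesis by (simp add: F1_def[abs_def])
  qed
  define Z where "Z t = (\<integral>y. G t y \<partial>lborel)" for t
  define Z1 where "Z1 t = (\<integral>y. F1 t y \<partial>lborel)" for t
  define Z2 where "Z2 t = (\<integral>y. F2 t y \<partial>lborel)" for t
  have dZ: "(Z has_real_derivative Z1 t) (at t)" for t
    unfolding Z_def[abs_def] Z1_def
    by (rule DERIV_integral_dom[OF intG F1m dG intE bF1])
  have dZ1: "(Z1 has_real_derivative Z2 t) (at t)" for t
    unfolding Z1_def[abs_def] Z2_def
    by (rule DERIV_integral_dom[OF intF1 F2m dF1 intE bF2])
  have Zpos: "Z t > 0" for t
  proof -
    have "Z t \<ge> 0" unfolding Z_def by (intro integral_nonneg_AE) (use Gpos in \<open>auto intro: less_imp_le\<close>)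
    moreover have "Z t \<noteq> 0"
    proof
      assume "Z t = 0"
      have nn: "AE y in lborel. 0 \<le> G t y" using Gpos by (auto intro: less_imp_le)
      from \<open>Z t = 0\<close> have "AE y in lborel. G t y = 0"
        using integral_nonneg_eq_0_iff_AE[OF intG nn] unfolding Z_def by simp
      hence "AE y in (lborel :: 'a measure). False" using Gpos by (auto elim: AE_mp simp: less_le)
      hence "ae_filter (lborel :: 'a measure) = bot" using trivial_limit_def by blast
      thus False by (simp add: ae_filter_eq_bot_iff)
    qed
    ultimately show ?thesis by simp
  qed
  have var: "Z2 t * Z t - Z1 t * Z1 t \<le> 0" for t
  proof -
    define x where "x = x0 + t *\<^sub>R v"
    obtain Cx where Cx: "Cx \<le> k" "poincare (mu f lam del x) Cx" using P unfolding k_def by blast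
    define R1 where "R1 = (\<integral>y. G t y * r t y \<partial>lborel)"
    define R2 where "R2 = (\<integral>y. G t y * (r t y)\<^sup>2 \<partial>lborel)"
    have Zp: "Z t > 0" by (rule Zpos)
    have Z1eq: "Z1 t = R1 / k"
    proof -
      have "Z1 t = (\<integral>y. G t y * r t y / k \<partial>lborel)" by (simp add: Z1_def F1_def)
      also have "\<dots> = R1 / k" by (simp add: R1_def)
      finally show ?thesis .
    qed
    have Z2eq: "Z2 t = R2 / k\<^sup>2 - (b / k) * Z t"
    proof -
      have "F2 t y = G t y * (r t y)\<^sup>2 / k\<^sup>2 - (b / k) * G t y" for y
        by (simp add: F2_def power_divide algebra_simps)
      hence "Z2 t = (\<integral>y. G t y * (r t y)\<^sup>2 / k\<^sup>2 - (b / k) * G t y \<partial>lborel)"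
        by (simp add: Z2_def)
      also have "\<dots> = R2 / k\<^sup>2 - (b / k) * Z t"
        by (subst Bochner_Integration.integral_diff) (auto simp: R2_def Z_def intro!: integrable_divide intGr2 intG)
      finally show ?thesis .
    qed
    have mw: "mu_weight f lam del x y = G t y" for y
      by (simp add: mu_weight_def Gn E_def x_def k_def mult.assoc mult.commute)
    define \<rho> where "\<rho> y = G t y / Z t" for y
    have \<rho>m[measurable]: "\<rho> \<in> borel_measurable lborel" unfolding \<rho>_def[abs_def] by measurable
    have \<rho>nn: "AE y in lborel. 0 \<le> \<rho> y" using Gpos Zp by (auto simp: \<rho>_def intro!: AE_I2 less_imp_le)
    have muq: "mu f lam del x = density lborel (\<lambda>y. ennreal (\<rho> y))"
      unfolding mu_def mw by (simp add: \<rho>_def Z_def)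
    have gd: "GDERIV (r t) y :> v" for y
      unfolding gderiv_def r_def[abs_def] a_def by (auto intro!: derivative_eq_intros)
    have int1: "integrable (mu f lam del x) (\<lambda>y. (r t y)\<^sup>2)"
    proof -
      have "(\<lambda>y. \<rho> y *\<^sub>R (r t y)\<^sup>2) = (\<lambda>y. G t y * (r t y)\<^sup>2 / Z t)" by (auto simp: \<rho>_def)
      moreover have "integrable lborel (\<lambda>y. G t y * (r t y)\<^sup>2 / Z t)"
        by (intro integrable_divide intGr2)
      ultimately show ?thesis unfolding muq by (subst integrable_density) (auto simp: \<rho>nn)
    qed
    have int2: "integrable (mu f lam del x) (\<lambda>y. (norm ((\<lambda>_. v) y))\<^sup>2)"
    proof -
      have "(\<lambda>y. \<rho> y *\<^sub>R (norm v)\<^sup>2) = (\<lambda>y. ((norm v)\<^sup>2 / Z t) * G t y)" by (auto simp: \<rho>_def)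
      moreover have "integrable lborel (\<lambda>y. ((norm v)\<^sup>2 / Z t) * G t y)"
        by (intro integrable_mult_right intG)
      ultimately show ?thesis unfolding muq by (subst integrable_density) (auto simp: \<rho>nn)
    qed
    have PI: "(\<integral>y. (r t y - (\<integral>z. r t z \<partial>mu f lam del x))\<^sup>2 \<partial>mu f lam del x)
              \<le> Cx * (\<integral>y. (norm ((\<lambda>_. v) y))\<^sup>2 \<partial>mu f lam del x)"
    proof -
      have H: "\<forall>g G. (\<forall>y. GDERIV g y :> G y) \<longrightarrow> continuous_on UNIV G \<longrightarrow>
        integrable (mu f lam del x) (\<lambda>y. (g y)\<^sup>2) \<longrightarrow> integrable (mu f lam del x) (\<lambda>y. (norm (G y))\<^sup>2) \<longrightarrow>
        (\<integral>y. (g y - (\<integral>z. g z \<partial>mu f lam del x))\<^sup>2 \<partial>mu f lam del x) \<le> Cx * (\<integral>y. (norm (G y))\<^sup>2 \<partial>mu f lam del x)"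
        using Cx(2) unfolding poincare_def by blast
      have c: "continuous_on UNIV (\<lambda>_::'a. v)" by (rule continuous_on_const)
      from H[THEN spec[of _ "r t"], THEN spec[of _ "\<lambda>_. v"]] gd int1 int2 c
      show ?thesis by blast
    qed
    define m where "m = (\<integral>z. r t z \<partial>mu f lam del x)"
    have meq: "m = R1 / Z t"
    proof -
      have "m = (\<integral>y. \<rho> y *\<^sub>R r t y \<partial>lborel)"
        unfolding m_def muq by (subst integral_density) (auto simp: \<rho>nn)
      also have "\<dots> = (\<integral>y. G t y * r t y / Z t \<partial>lborel)" by (simp add: \<rho>_def)
      also have "\<dots> = R1 / Z t" by (simp add: R1_def)
      finally show ?thesis .
    qed
    have lhs: "(\<integral>y. (r t y - m)\<^sup>2 \<partial>mu f lam del x) = R2 / Z t - 2 * m / Z t * R1 + m\<^sup>2 / Z t * Z t"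
    proof -
      have "(\<integral>y. (r t y - m)\<^sup>2 \<partial>mu f lam del x) = (\<integral>y. \<rho> y *\<^sub>R (r t y - m)\<^sup>2 \<partial>lborel)"
        unfolding muq by (subst integral_density) (auto simp: \<rho>nn)
      also have "\<dots> = (\<integral>y. G t y * (r t y)\<^sup>2 / Z t - (2 * m / Z t) * (G t y * r t y) + (m\<^sup>2 / Z t) * G t y \<partial>lborel)"
        using Zp by (intro Bochner_Integration.integral_cong) (auto simp: \<rho>_def power2_diff field_simps)
      also have "\<dots> = R2 / Z t - 2 * m / Z t * R1 + m\<^sup>2 / Z t * Z t"
      proof -
        have i1: "integrable lborel (\<lambda>y. G t y * (r t y)\<^sup>2 / Z t)" by (intro integrable_divide intGr2)
        have i2: "integrable lborel (\<lambda>y. (2 * m / Z t) * (G t y * r t y))" by (intro integrable_mult_right intGr)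
        have i3: "integrable lborel (\<lambda>y. (m\<^sup>2 / Z t) * G t y)" by (intro integrable_mult_right intG)
        have "(\<integral>y. G t y * (r t y)\<^sup>2 / Z t - (2 * m / Z t) * (G t y * r t y) + (m\<^sup>2 / Z t) * G t y \<partial>lborel)
          = (\<integral>y. G t y * (r t y)\<^sup>2 / Z t - (2 * m / Z t) * (G t y * r t y) \<partial>lborel) + (\<integral>y. (m\<^sup>2 / Z t) * G t y \<partial>lborel)"
          by (rule Bochner_Integration.integral_add[OF Bochner_Integration.integrable_diff[OF i1 i2] i3])
        also have "(\<integral>y. G t y * (r t y)\<^sup>2 / Z t - (2 * m / Z t) * (G t y * r t y) \<partial>lborel)
          = (\<integral>y. G t y * (r t y)\<^sup>2 / Z t \<partial>lborel) - (\<integral>y. (2 * m / Z t) * (G t y * r t y) \<partial>lborel)"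
          by (rule Bochner_Integration.integral_diff[OF i1 i2])
        finally show ?thesis by (simp add: R1_def R2_def Z_def)
      qed
      finally show ?thesis .
    qed
    have rhs: "(\<integral>y. (norm ((\<lambda>_. v) y))\<^sup>2 \<partial>mu f lam del x) = b"
    proof -
      have "(\<integral>y. (norm ((\<lambda>_. v) y))\<^sup>2 \<partial>mu f lam del x) = (\<integral>y. \<rho> y *\<^sub>R (norm v)\<^sup>2 \<partial>lborel)"
        unfolding muq by (subst integral_density) (auto simp: \<rho>nn)
      also have "\<dots> = (\<integral>y. ((norm v)\<^sup>2 / Z t) * G t y \<partial>lborel)" by (simp add: \<rho>_def)
      also have "\<dots> = (norm v)\<^sup>2 / Z t * Z t" by (simp add: Z_def)
      also have "\<dots> = b" using Zp by (simp add: b_eq)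
      finally show ?thesis .
    qed
    have V: "R2 / Z t - (R1 / Z t)\<^sup>2 \<le> k * b"
    proof -
      have "R2 / Z t - (R1 / Z t)\<^sup>2 = R2 / Z t - 2 * m / Z t * R1 + m\<^sup>2 / Z t * Z t"
        using Zp by (simp add: meq power2_eq_square field_simps)
      also have "\<dots> \<le> Cx * b" using PI lhs rhs by (simp add: m_def)
      also have "\<dots> \<le> k * b" using Cx(1) b_eq by (intro mult_right_mono) auto
      finally show ?thesis .
    qed
    have "(R2 / Z t - (R1 / Z t)\<^sup>2) * (Z t)\<^sup>2 \<le> k * b * (Z t)\<^sup>2"
      using V by (intro mult_right_mono) auto
    moreover have "(R2 / Z t - (R1 / Z t)\<^sup>2) * (Z t)\<^sup>2 = R2 * Z t - R1\<^sup>2"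
      using Zp by (simp add: power2_eq_square field_simps)
    ultimately have V2: "R2 * Z t - R1\<^sup>2 \<le> k * b * (Z t)\<^sup>2" by simp
    have "Z2 t * Z t - Z1 t * Z1 t = (R2 * Z t - R1\<^sup>2) / k\<^sup>2 - b * (Z t)\<^sup>2 / k"
      using k by (simp add: Z1eq Z2eq power2_eq_square field_simps)
    also have "\<dots> \<le> (k * b * (Z t)\<^sup>2) / k\<^sup>2 - b * (Z t)\<^sup>2 / k"
      using V2 k by (intro diff_right_mono divide_right_mono) auto
    also have "\<dots> = 0" using k by (simp add: power2_eq_square field_simps)
    finally show ?thesis .
  qed
  define c0 :: real where "c0 = (2 * pi * lam * del) powr (- real DIM('a) / 2)"
  have c0: "c0 > 0" using lam del by (simp add: c0_def)
  have phi: "soft_moreau f lam del (x0 + t *\<^sub>R v) = - del * ln (c0 * Z t)" for t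
  proof -
    have "(\<lambda>y. exp (- (norm (y - (x0 + t *\<^sub>R v)))\<^sup>2 / (2 * lam * del)) * exp (- f y / del)) = G t"
      by (auto simp: Gn E_def k_def mult.assoc mult.commute)
    thus ?thesis by (simp add: soft_moreau_def c0_def Z_def)
  qed
  define phi' where "phi' t = - del * (Z1 t / Z t)" for t
  have dphi: "((\<lambda>t. soft_moreau f lam del (x0 + t *\<^sub>R v)) has_real_derivative phi' t) (at t)" for t
  proof -
    have "((\<lambda>t. - del * ln (c0 * Z t)) has_real_derivative - del * ((c0 * Z1 t) / (c0 * Z t))) (at t)"
      using c0 Zpos[of t] by (auto intro!: derivative_eq_intros dZ)
    thus ?thesis using c0 by (simp add: phi phi'_def)
  qed
  have dphi': "(phi' has_real_derivative - del * ((Z2 t * Z t - Z1 t * Z1 t) / (Z t * Z t))) (at t)" for t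
    unfolding phi'_def[abs_def]
    using Zpos[of t] by (auto intro!: derivative_eq_intros dZ dZ1 simp: field_simps)
  show ?thesis
  proof (rule convex_on_realI[where f'=phi'])
    show "connected (UNIV :: real set)" by simp
    show "((\<lambda>t. soft_moreau f lam del (x0 + t *\<^sub>R v)) has_real_derivative phi' t) (at t)" for t
      by (rule dphi)
    show "phi' s \<le> phi' t" if "s \<le> t" for s t
    proof (rule DERIV_nonneg_imp_nondecreasing[OF that])
      fix z
      have "0 \<le> - del * ((Z2 z * Z z - Z1 z * Z1 z) / (Z z * Z z))"
        using del var[of z] Zpos[of z] by (intro mult_nonpos_nonpos divide_nonpos_pos) auto
      with dphi'[of z] show "\<exists>y. (phi' has_real_derivative y) (at z) \<and> 0 \<le> y" by blast
    qed
  qed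
qed
theorem proposition4:
  fixes f :: "'a::euclidean_space \<Rightarrow> real" and lam del CP :: real
  assumes "lam > 0" and "del > 0"
    and "continuous_on UNIV f"
    and "\<exists>x0. \<forall>y. f x0 \<le> f y"
    and "(\<integral>\<^sup>+ y. ennreal (exp (- f y / del)) \<partial>lborel) < \<infinity>"
    and "\<forall>x. \<exists>Cx. Cx \<le> CP \<and> poincare (mu f lam del x) Cx"
    and "lam \<ge> CP / del"
  shows "convex_on UNIV (soft_moreau f lam del)"
proof -
  have fm[measurable]: "f \<in> borel_measurable lborel"
    using borel_measurable_continuous_onI[OF assms(3)] by simp
  have Eint: "integrable lborel (\<lambda>y. exp (- f y / del))"
    by (rule integrableI_nonneg) (use assms(5) in auto)
  have CP: "CP \<le> lam * del" using assms(2,7) by (simp add: pos_divide_le_eq)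
  have P: "\<forall>x. \<exists>Cx. Cx \<le> lam * del \<and> poincare (mu f lam del x) Cx"
    using assms(6) CP by (meson order_trans)
  show ?thesis
    unfolding convex_on_def
  proof (intro conjI ballI allI impI)
    show "convex (UNIV :: 'a set)" by simp
    fix x y :: 'a and u w :: real
    assume u: "0 \<le> u" and w: "0 \<le> w" and uw: "u + w = 1"
    have lc: "convex_on UNIV (\<lambda>t. soft_moreau f lam del (x + t *\<^sub>R (y - x)))"
      by (rule line_convex[OF assms(1,2,3) Eint P])
    have u1: "u = 1 - w" using uw by simp
    have "soft_moreau f lam del (x + w *\<^sub>R (y - x))
       \<le> u * soft_moreau f lam del x + w * soft_moreau f lam del y"
      using convex_onD[OF lc, of w 0 1] u w uw by (simp add: u1)
    moreover have "x + w *\<^sub>R (y - x) = u *\<^sub>R x + w *\<^sub>R y"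
      by (simp add: u1 algebra_simps)
    ultimately show "soft_moreau f lam del (u *\<^sub>R x + w *\<^sub>R y) \<le> u * soft_moreau f lam del x + w * soft_moreau f lam del y"
      by simp
  qed
qed

end
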